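(* There is an absolute constant $C>0$ such that the following holds. Let $n,d,k\ge1$, let $\phi:\mathbb{R}\to\mathbb{R}$ be $L$-Lipschitz with $\phi(0)=0$, let $b>0$, and let $x_1,\dots,x_n,x'_1,\dots,x'_n\in\mathbb{R}^d$ satisfy $\|x_i\|_2,\|x'_i\|_2\le b$. For $a>0$ let $\mathcal{G}^k_a=\{A\in\mathbb{R}^{d\times k}:\|A\|_{2,\infty}\le a\}$. Then $$\widehat{\mathfrak{R}}\big(\mathcal{F}_k(\mathcal{G}^k_a)\big)\le C\left(\frac1n+\frac{a^2b^2L^2}{\sqrt n}\sqrt{\log(2d)}\,\log\big(2+n\,b^2a^2L^2\big)\right);$$ in particular the bound does not depend on $k$.
   Context: For $A\in\mathbb{R}^{d\times k}$ with columns $A_{\cdot 1},\dots,A_{\cdot k}$: $\|A\|_{2,\infty}=\max_{j\le k}\|A_{\cdot j}\|_2$. For $u,v\in\mathbb{R}^k$, $\zeta_k(u,v)=\frac1k\|u-v\|_2^2$. The function $\phi$ is applied coordinatewise to vectors. Given fixed points $x_1,\dots,x_n,x'_1,\dots,x'_n\in\mathbb{R}^d$ and a set $\mathcal{G}\subset\mathbb{R}^{d\times k}$, define $\mathcal{F}_k(\mathcal{G})=\{(\zeta_k(\phi(A^tx_i),\phi(A^tx'_i)))_{i=1}^n : A\in\mathcal{G}\}\subset\mathbb{R}^n$. For a set $\mathcal{F}\subset\mathbb{R}^n$, $\widehat{\mathfrak{R}}(\mathcal{F})=\frac1n\mathbb{E}_\varepsilon\sup_{f\in\mathcal{F}}\sum_{i=1}^n\varepsilon_if_i$,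 where $\varepsilon_1,\dots,\varepsilon_n$ are i.i.d. uniform on $\{-1,1\}$. *)

theory Defs
  imports "HOL-Analysis.Analysis"
begin

text \<open>Dimensions vary inside the statement, so vectors in R^d are functions
  nat => real indexed by i < d, and d x k matrices are nat => nat => real
  (entry A i j, i < d, j < k), taken zero outside the index range.\<close>

definition matrices :: "nat \<Rightarrow> nat \<Rightarrow> (nat \<Rightarrow> nat \<Rightarrow> real) set" where
  "matrices d k = {A. \<forall>i j. \<not> (i < d \<and> j < k) \<longrightarrow> A i j = 0}"

definition norm_2_inf :: "nat \<Rightarrow> nat \<Rightarrow> (nat \<Rightarrow> nat \<Rightarrow> real) \<Rightarrow> real" where
  "norm_2_inf d k A = Max {sqrt (\<Sum>i<d. (A i j)\<^sup>2) | j. j < k}"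

definition G_ball :: "nat \<Rightarrow> nat \<Rightarrow> real \<Rightarrow> (nat \<Rightarrow> nat \<Rightarrow> real) set" where
  "G_ball d k a = {A \<in> matrices d k. norm_2_inf d k A \<le> a}"

definition matT_vec :: "nat \<Rightarrow> (nat \<Rightarrow> nat \<Rightarrow> real) \<Rightarrow> (nat \<Rightarrow> real) \<Rightarrow> nat \<Rightarrow> real" where
  "matT_vec d A x = (\<lambda>j. \<Sum>i<d. A i j * x i)"

definition zeta :: "nat \<Rightarrow> (nat \<Rightarrow> real) \<Rightarrow> (nat \<Rightarrow> real) \<Rightarrow> real" where
  "zeta k u v = (1 / real k) * (\<Sum>j<k. (u j - v j)\<^sup>2)"

definition F_class ::
  "nat \<Rightarrow> nat \<Rightarrow> nat \<Rightarrow> (real \<Rightarrow> real) \<Rightarrow> (nat \<Rightarrow> nat \<Rightarrow> real) \<Rightarrow> (nat \<Rightarrow> nat \<Rightarrow> real)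
    \<Rightarrow> (nat \<Rightarrow> nat \<Rightarrow> real) set \<Rightarrow> (nat \<Rightarrow> real) set" where
  "F_class n d k \<phi> x x' G =
     (\<lambda>A. (\<lambda>t. if t < n then zeta k (\<lambda>j. \<phi> (matT_vec d A (x t) j)) (\<lambda>j. \<phi> (matT_vec d A (x' t) j)) else 0)) ` G"

text \<open>Empirical Rademacher complexity: expectation over uniform signs in {-1,1}^n,
  written as the average over all 2^n sign vectors.\<close>
definition rademacher :: "nat \<Rightarrow> (nat \<Rightarrow> real) set \<Rightarrow> real" where
  "rademacher n F = (1 / real n) *
     ((\<Sum>\<epsilon>\<in>PiE {..<n} (\<lambda>_. {-1, 1}). Sup ((\<lambda>f. \<Sum>i<n. \<epsilon> i * f i) ` F)) / 2 ^ n)"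

end

theory Submission
  imports Defs
begin


definition signs :: "nat \<Rightarrow> (nat \<Rightarrow> real) set" where
  "signs m = PiE {..<m} (\<lambda>_. {-1, 1})"

definition E :: "nat \<Rightarrow> ((nat \<Rightarrow> real) \<Rightarrow> real) \<Rightarrow> real" where
  "E m F = (\<Sum>e\<in>signs m. F e) / 2 ^ m"

lemma finite_signs: "finite (signs m)"
  unfolding signs_def by (simp add: finite_PiE)

lemma E_Suc: "E (Suc m) F = (E m (\<lambda>e. F (e(m:=1))) + E m (\<lambda>e. F (e(m:=-1)))) / 2"
proof -
  have eq: "signs (Suc m) = (\<lambda>(y, g). g(m := y)) ` ({-1,1} \<times> signs m)"
    unfolding signs_def lessThan_Suc by (simp add: PiE_insert_eq)
  have inj: "inj_on (\<lambda>(y, g). g(m := y)) ({-1::real,1} \<times> signs m)"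
    unfolding signs_def using inj_combinator[of m "{..<m}" "\<lambda>_. {-1::real,1}"] by simp
  have "(\<Sum>e\<in>signs (Suc m). F e) = (\<Sum>p\<in>{-1,1} \<times> signs m. F ((snd p)(m := fst p)))"
    unfolding eq by (subst sum.reindex[OF inj]) (simp add: case_prod_beta)
  also have "\<dots> = (\<Sum>y\<in>{-1::real,1}. \<Sum>g\<in>signs m. F (g(m:=y)))"
    by (simp add: sum.cartesian_product case_prod_beta)
  also have "\<dots> = (\<Sum>g\<in>signs m. F (g(m:=1))) + (\<Sum>g\<in>signs m. F (g(m:=-1)))"
    by simp
  finally show ?thesis unfolding E_def by (simp add: field_simps)
qed

lemma E_mono: "(\<And>e. e \<in> signs m \<Longrightarrow> F e \<le> G e) \<Longrightarrow> E m F \<le> E m G"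
  unfolding E_def by (intro divide_right_mono sum_mono) auto

lemma E_add: "E m (\<lambda>e. F e + G e) = E m F + E m G"
  unfolding E_def by (simp add: sum.distrib add_divide_distrib)

lemma E_cmult: "E m (\<lambda>e. c * F e) = c * E m F"
  unfolding E_def by (simp add: sum_distrib_left)

lemma E_const: "E m (\<lambda>e. c) = c"
proof -
  have "card (signs m) = 2 ^ m"
  proof -
    have c2: "card {-1::real,1} = 2" by simp
    show ?thesis unfolding signs_def by (simp add: card_PiE c2)
  qed
  then show ?thesis unfolding E_def by simp
qed

lemma E_divide: "E m (\<lambda>e. F e / c) = E m F / c"
  unfolding E_def by (simp add: sum_divide_distrib mult.commute)

definition E2 :: "nat \<Rightarrow> ((nat \<Rightarrow> real) \<Rightarrow> (nat \<Rightarrow> real) \<Rightarrow> real) \<Rightarrow> real" where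
  "E2 m G = E m (\<lambda>a. E m (\<lambda>b. G a b))"

lemma E2_Suc: "E2 (Suc m) G = E2 m (\<lambda>a b. (G (a(m:=1)) (b(m:=1)) + G (a(m:=1)) (b(m:=-1))
     + G (a(m:=-1)) (b(m:=1)) + G (a(m:=-1)) (b(m:=-1))) / 4)"
  unfolding E2_def E_Suc
  by (simp add: E_add E_divide add_divide_distrib)

lemma E2_mono: "(\<And>a b. G a b \<le> H a b) \<Longrightarrow> E2 m G \<le> E2 m H"
  unfolding E2_def by (intro E_mono) auto

lemma E2_add: "E2 m (\<lambda>a b. F a b + G a b) = E2 m F + E2 m G"
  unfolding E2_def by (simp add: E_add)

lemma E2_divide: "E2 m (\<lambda>a b. F a b / c) = E2 m F / c"
  unfolding E2_def by (simp add: E_divide)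

definition bnd :: "'a set \<Rightarrow> ('a \<Rightarrow> real) \<Rightarrow> bool" where
  "bnd W f = (\<exists>B. \<forall>w\<in>W. \<bar>f w\<bar> \<le> B)"

definition S :: "'a set \<Rightarrow> ('a \<Rightarrow> real) \<Rightarrow> real" where
  "S W f = Sup (f ` W)"

lemma S_upper: "bnd W f \<Longrightarrow> w \<in> W \<Longrightarrow> f w \<le> S W f"
  unfolding S_def bnd_def
  by (rule cSup_upper) (auto simp: bdd_above_def abs_le_iff)

lemma S_least: "W \<noteq> {} \<Longrightarrow> (\<And>w. w \<in> W \<Longrightarrow> f w \<le> z) \<Longrightarrow> S W f \<le> z"
  unfolding S_def by (rule cSup_least) auto

lemma bnd_add: "bnd W f \<Longrightarrow> bnd W g \<Longrightarrow> bnd W (\<lambda>w. f w + g w)"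
  unfolding bnd_def by (metis (no_types, opaque_lifting) abs_triangle_ineq add_mono order_trans)

lemma bnd_diff: "bnd W f \<Longrightarrow> bnd W g \<Longrightarrow> bnd W (\<lambda>w. f w - g w)"
  unfolding bnd_def by (metis (no_types, opaque_lifting) abs_triangle_ineq4 add_mono order_trans)

lemma bnd_cmult: "bnd W f \<Longrightarrow> bnd W (\<lambda>w. c * f w)"
  unfolding bnd_def
proof -
  assume "\<exists>B. \<forall>w\<in>W. \<bar>f w\<bar> \<le> B"
  then obtain B where B: "\<forall>w\<in>W. \<bar>f w\<bar> \<le> B" by blast
  have "\<forall>w\<in>W. \<bar>c * f w\<bar> \<le> \<bar>c\<bar> * B"
    using B by (simp add: abs_mult mult_left_mono)
  then show "\<exists>B. \<forall>w\<in>W. \<bar>c * f w\<bar> \<le> B" by blast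
qed

lemma bnd_const: "bnd W (\<lambda>w. c)"
  unfolding bnd_def by blast

lemma bnd_sum: "finite I \<Longrightarrow> (\<And>i. i \<in> I \<Longrightarrow> bnd W (f i)) \<Longrightarrow> bnd W (\<lambda>w. \<Sum>i\<in>I. f i w)"
proof (induction I rule: finite_induct)
  case empty then show ?case by (simp add: bnd_const)
next
  case (insert x F)
  then show ?case by (simp add: bnd_add)
qed

lemma abs_pm: "\<bar>u\<bar> + \<bar>v\<bar> \<le> \<bar>u + v\<bar> + \<bar>u - v\<bar>" for u v :: real
  by (simp add: abs_if)

lemma one_step:
  fixes W :: "'a set"
  assumes ne: "W \<noteq> {}" and bZ: "bnd W Z" and bpsi: "bnd W psi" and bp: "bnd W p" and bq: "bnd W q"
    and K: "K \<ge> 0"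
    and lip: "\<And>w w'. w \<in> W \<Longrightarrow> w' \<in> W \<Longrightarrow> psi w - psi w' \<le> K * (\<bar>p w - p w'\<bar> + \<bar>q w - q w'\<bar>)"
  shows "(S W (\<lambda>w. Z w + psi w) + S W (\<lambda>w. Z w - psi w)) / 2 \<le>
     (S W (\<lambda>w. Z w + 2*K*(1 * p w + 1 * q w)) + S W (\<lambda>w. Z w + 2*K*(1 * p w + -1 * q w))
      + S W (\<lambda>w. Z w + 2*K*(-1 * p w + 1 * q w)) + S W (\<lambda>w. Z w + 2*K*(-1 * p w + -1 * q w))) / 4"
proof -
  define X where "X = (S W (\<lambda>w. Z w + 2*K*(1 * p w + 1 * q w)) + S W (\<lambda>w. Z w + 2*K*(1 * p w + -1 * q w))
      + S W (\<lambda>w. Z w + 2*K*(-1 * p w + 1 * q w)) + S W (\<lambda>w. Z w + 2*K*(-1 * p w + -1 * q w))) / 2"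
  have b1: "bnd W (\<lambda>w. Z w + 2*K*(s1 * p w + s2 * q w))" for s1 s2
    by (intro bnd_add bnd_cmult bZ bp bq)
  have core: "Z w + psi w + (Z w' - psi w') \<le> X" if w: "w \<in> W" "w' \<in> W" for w w'
  proof -
    note U = S_upper[OF b1 w(1)] S_upper[OF b1 w(2)]
    have u1: "Z w + 2*K*(1 * p w + 1 * q w) \<le> S W (\<lambda>w. Z w + 2*K*(1 * p w + 1 * q w))" by (rule U)
    have u2: "Z w' + 2*K*(1 * p w' + 1 * q w') \<le> S W (\<lambda>w. Z w + 2*K*(1 * p w + 1 * q w))" by (rule U)
    have u3: "Z w + 2*K*(-1 * p w + -1 * q w) \<le> S W (\<lambda>w. Z w + 2*K*(-1 * p w + -1 * q w))" by (rule U)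
    have u4: "Z w' + 2*K*(-1 * p w' + -1 * q w') \<le> S W (\<lambda>w. Z w + 2*K*(-1 * p w + -1 * q w))" by (rule U)
    have u5: "Z w + 2*K*(1 * p w + -1 * q w) \<le> S W (\<lambda>w. Z w + 2*K*(1 * p w + -1 * q w))" by (rule U)
    have u6: "Z w' + 2*K*(1 * p w' + -1 * q w') \<le> S W (\<lambda>w. Z w + 2*K*(1 * p w + -1 * q w))" by (rule U)
    have u7: "Z w + 2*K*(-1 * p w + 1 * q w) \<le> S W (\<lambda>w. Z w + 2*K*(-1 * p w + 1 * q w))" by (rule U)
    have u8: "Z w' + 2*K*(-1 * p w' + 1 * q w') \<le> S W (\<lambda>w. Z w + 2*K*(-1 * p w + 1 * q w))" by (rule U)
    define u where "u = p w - p w'"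
    define v where "v = q w - q w'"
    have A: "Z w + Z w' + 2*K*\<bar>u + v\<bar> \<le> S W (\<lambda>w. Z w + 2*K*(1 * p w + 1 * q w)) + S W (\<lambda>w. Z w + 2*K*(-1 * p w + -1 * q w))"
    proof (cases "u + v \<ge> 0")
      case True
      then have "\<bar>u+v\<bar> = u + v" by simp
      then show ?thesis using u1 u4 unfolding u_def v_def by (simp add: algebra_simps)
    next
      case False
      then have "\<bar>u+v\<bar> = -(u + v)" by simp
      then show ?thesis using u2 u3 unfolding u_def v_def by (simp add: algebra_simps)
    qed
    have B: "Z w + Z w' + 2*K*\<bar>u - v\<bar> \<le> S W (\<lambda>w. Z w + 2*K*(1 * p w + -1 * q w)) + S W (\<lambda>w. Z w + 2*K*(-1 * p w + 1 * q w))"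
    proof (cases "u - v \<ge> 0")
      case True
      then have "\<bar>u-v\<bar> = u - v" by simp
      then show ?thesis using u5 u8 unfolding u_def v_def by (simp add: algebra_simps)
    next
      case False
      then have "\<bar>u-v\<bar> = -(u - v)" by simp
      then show ?thesis using u6 u7 unfolding u_def v_def by (simp add: algebra_simps)
    qed
    have "psi w - psi w' \<le> K * (\<bar>u\<bar> + \<bar>v\<bar>)" using lip[OF w] unfolding u_def v_def .
    also have "\<dots> \<le> K * (\<bar>u + v\<bar> + \<bar>u - v\<bar>)" using K abs_pm by (rule mult_left_mono[rotated])
    finally have "psi w - psi w' \<le> K * (\<bar>u + v\<bar> + \<bar>u - v\<bar>)" .
    then show ?thesis using A B unfolding X_def by (simp add: algebra_simps)
  qed
  have "S W (\<lambda>w. Z w + psi w) \<le> X - S W (\<lambda>w. Z w - psi w)"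
  proof (rule S_least[OF ne])
    fix w assume w: "w \<in> W"
    have "S W (\<lambda>w. Z w - psi w) \<le> X - (Z w + psi w)"
      by (rule S_least[OF ne]) (use core w in force)
    then show "Z w + psi w \<le> X - S W (\<lambda>w. Z w - psi w)" by simp
  qed
  moreover have "\<And>a b c d e f :: real. a \<le> (c+d+e+f)/2 - b \<Longrightarrow> (a+b)/2 \<le> (c+d+e+f)/4"
    by (simp add: field_simps)
  ultimately show ?thesis unfolding X_def by blast
qed

lemma sum_upd: "(\<Sum>t<Suc m. (e(m:=s)) t * f t) = (\<Sum>t<m. e t * f t) + s * f m"
proof -
  have "(\<Sum>t<m. (e(m:=s)) t * f t) = (\<Sum>t<m. e t * f t)"
    by (rule sum.cong) auto
  then show ?thesis by simp
qed

lemma sum_upd2: "(\<Sum>t<Suc m. (a(m:=s1)) t * p t + (b(m:=s2)) t * q t)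
   = (\<Sum>t<m. a t * p t + b t * q t) + (s1 * p m + s2 * q m)"
proof -
  have "(\<Sum>t<m. (a(m:=s1)) t * p t + (b(m:=s2)) t * q t) = (\<Sum>t<m. a t * p t + b t * q t)"
    by (rule sum.cong) auto
  then show ?thesis by simp
qed

lemma S_cong: "(\<And>w. f w = g w) \<Longrightarrow> S W f = S W g"
  by (metis ext)

lemma contraction:
  fixes W :: "'a set" and psi p q :: "nat \<Rightarrow> 'a \<Rightarrow> real"
  assumes ne: "W \<noteq> {}" and K: "K \<ge> 0"
    and bpsi: "\<And>t. t < N \<Longrightarrow> bnd W (psi t)"
    and bp: "\<And>t. t < N \<Longrightarrow> bnd W (p t)"
    and bq: "\<And>t. t < N \<Longrightarrow> bnd W (q t)"
    and lip: "\<And>t w w'. t < N \<Longrightarrow> w \<in> W \<Longrightarrow> w' \<in> W \<Longrightarrow>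
        psi t w - psi t w' \<le> K * (\<bar>p t w - p t w'\<bar> + \<bar>q t w - q t w'\<bar>)"
  shows "m \<le> N \<Longrightarrow> bnd W Z \<Longrightarrow>
    E m (\<lambda>e. S W (\<lambda>w. Z w + (\<Sum>t<m. e t * psi t w)))
    \<le> E2 m (\<lambda>a b. S W (\<lambda>w. Z w + 2*K*(\<Sum>t<m. a t * p t w + b t * q t w)))"
proof (induction m arbitrary: Z)
  case 0
  then show ?case by (simp add: E2_def E_const)
next
  case (Suc m)
  have mN: "m < N" "m \<le> N" using Suc.prems by auto
  define ZZ where "ZZ a b = (\<lambda>w. Z w + 2*K*(\<Sum>t<m. a t * p t w + b t * q t w))" for a b
  have bZZ: "bnd W (ZZ a b)" for a b
    unfolding ZZ_def using mN
    by (intro bnd_add Suc.prems bnd_cmult bnd_sum) (auto intro!: bnd_add bnd_cmult bp bq)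
  have IH1: "E m (\<lambda>e. S W (\<lambda>w. (Z w + s * psi m w) + (\<Sum>t<m. e t * psi t w)))
    \<le> E2 m (\<lambda>a b. S W (\<lambda>w. (Z w + s * psi m w) + 2*K*(\<Sum>t<m. a t * p t w + b t * q t w)))" for s
    using mN by (intro Suc.IH bnd_add Suc.prems bnd_cmult bpsi) auto
  have L: "E (Suc m) (\<lambda>e. S W (\<lambda>w. Z w + (\<Sum>t<Suc m. e t * psi t w)))
     = (E m (\<lambda>e. S W (\<lambda>w. (Z w + 1 * psi m w) + (\<Sum>t<m. e t * psi t w)))
      + E m (\<lambda>e. S W (\<lambda>w. (Z w + -1 * psi m w) + (\<Sum>t<m. e t * psi t w)))) / 2"
    unfolding E_Suc sum_upd by (simp add: algebra_simps)
  have "\<dots> \<le> (E2 m (\<lambda>a b. S W (\<lambda>w. (Z w + 1 * psi m w) + 2*K*(\<Sum>t<m. a t * p t w + b t * q t w)))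
      + E2 m (\<lambda>a b. S W (\<lambda>w. (Z w + -1 * psi m w) + 2*K*(\<Sum>t<m. a t * p t w + b t * q t w)))) / 2"
    using IH1[of 1] IH1[of "-1"] by simp
  also have "\<dots> = E2 m (\<lambda>a b. (S W (\<lambda>w. ZZ a b w + psi m w) + S W (\<lambda>w. ZZ a b w - psi m w)) / 2)"
    unfolding E2_divide E2_add[symmetric] ZZ_def by (simp add: algebra_simps)
  also have "\<dots> \<le> E2 m (\<lambda>a b.
     (S W (\<lambda>w. ZZ a b w + 2*K*(1 * p m w + 1 * q m w)) + S W (\<lambda>w. ZZ a b w + 2*K*(1 * p m w + -1 * q m w))
      + S W (\<lambda>w. ZZ a b w + 2*K*(-1 * p m w + 1 * q m w)) + S W (\<lambda>w. ZZ a b w + 2*K*(-1 * p m w + -1 * q m w))) / 4)"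
    by (intro E2_mono one_step ne bZZ bpsi bp bq K lip mN) auto
  also have "\<dots> = E2 (Suc m) (\<lambda>a b. S W (\<lambda>w. Z w + 2*K*(\<Sum>t<Suc m. a t * p t w + b t * q t w)))"
    unfolding E2_Suc sum_upd2 ZZ_def by (simp add: algebra_simps)
  finally show ?case using L by simp
qed

lemma E_nonneg: "(\<And>e. 0 \<le> F e) \<Longrightarrow> 0 \<le> E m F"
  using E_mono[of m "\<lambda>_. 0" F] by (simp add: E_const)

lemma E_jensen: "E m f \<le> sqrt (E m (\<lambda>e. (f e)\<^sup>2))"
proof -
  define mu where "mu = E m f"
  have "0 \<le> E m (\<lambda>e. (f e - mu)\<^sup>2)" by (rule E_nonneg) simp
  also have "E m (\<lambda>e. (f e - mu)\<^sup>2) = E m (\<lambda>e. (f e)\<^sup>2 + ((-2*mu) * f e + mu\<^sup>2))"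
    by (simp add: power2_eq_square algebra_simps)
  also have "\<dots> = E m (\<lambda>e. (f e)\<^sup>2) - mu\<^sup>2"
    unfolding E_add E_cmult E_const mu_def by (simp add: power2_eq_square)
  finally have "mu\<^sup>2 \<le> E m (\<lambda>e. (f e)\<^sup>2)" by simp
  then have "sqrt (mu\<^sup>2) \<le> sqrt (E m (\<lambda>e. (f e)\<^sup>2))" by (rule real_sqrt_le_mono)
  then show ?thesis unfolding mu_def by simp
qed

lemma E2_jensen: "E2 m F \<le> sqrt (E2 m (\<lambda>a b. (F a b)\<^sup>2))"
proof -
  have "E2 m F \<le> E m (\<lambda>a. sqrt (E m (\<lambda>b. (F a b)\<^sup>2)))"
    unfolding E2_def by (intro E_mono E_jensen)
  also have "\<dots> \<le> sqrt (E m (\<lambda>a. (sqrt (E m (\<lambda>b. (F a b)\<^sup>2)))\<^sup>2))" by (rule E_jensen)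
  also have "\<dots> = sqrt (E2 m (\<lambda>a b. (F a b)\<^sup>2))"
    unfolding E2_def by (subst real_sqrt_pow2) (auto intro!: E_nonneg)
  finally show ?thesis .
qed

lemma E2_cong: "(\<And>a b. F a b = G a b) \<Longrightarrow> E2 m F = E2 m G"
  by (metis ext)

lemma second_moment:
  "E2 m (\<lambda>a b. \<Sum>i<d. (u i + (\<Sum>t<m. a t * x t i + b t * y t i))\<^sup>2)
   = (\<Sum>i<d. (u i)\<^sup>2) + (\<Sum>t<m. \<Sum>i<d. (x t i)\<^sup>2 + (y t i)\<^sup>2)"
proof (induction m arbitrary: u)
  case 0
  then show ?case by (simp add: E2_def E_const)
next
  case (Suc m)
  define v where "v s1 s2 = (\<lambda>i. u i + (s1 * x m i + s2 * y m i))" for s1 s2 :: real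
  have G: "(\<Sum>i<d. (u i + (\<Sum>t<Suc m. (a(m:=s1)) t * x t i + (b(m:=s2)) t * y t i))\<^sup>2)
     = (\<Sum>i<d. (v s1 s2 i + (\<Sum>t<m. a t * x t i + b t * y t i))\<^sup>2)" for a b s1 s2
    unfolding v_def sum_upd2 by (simp add: algebra_simps)
  have alg: "(\<Sum>i<d. (v 1 1 i)\<^sup>2) + (\<Sum>i<d. (v 1 (-1) i)\<^sup>2) + (\<Sum>i<d. (v (-1) 1 i)\<^sup>2)
      + (\<Sum>i<d. (v (-1) (-1) i)\<^sup>2) = 4 * ((\<Sum>i<d. (u i)\<^sup>2) + (\<Sum>i<d. (x m i)\<^sup>2 + (y m i)\<^sup>2))"
    unfolding sum.distrib[symmetric] sum_distrib_left
    by (rule sum.cong) (simp_all add: v_def power2_eq_square algebra_simps)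
  have "E2 (Suc m) (\<lambda>a b. \<Sum>i<d. (u i + (\<Sum>t<Suc m. a t * x t i + b t * y t i))\<^sup>2)
     = E2 m (\<lambda>a b. ((\<Sum>i<d. (v 1 1 i + (\<Sum>t<m. a t * x t i + b t * y t i))\<^sup>2)
        + (\<Sum>i<d. (v 1 (-1) i + (\<Sum>t<m. a t * x t i + b t * y t i))\<^sup>2)
        + (\<Sum>i<d. (v (-1) 1 i + (\<Sum>t<m. a t * x t i + b t * y t i))\<^sup>2)
        + (\<Sum>i<d. (v (-1) (-1) i + (\<Sum>t<m. a t * x t i + b t * y t i))\<^sup>2)) / 4)"
    unfolding E2_Suc G by simp
  also have "\<dots> = (E2 m (\<lambda>a b. \<Sum>i<d. (v 1 1 i + (\<Sum>t<m. a t * x t i + b t * y t i))\<^sup>2)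
        + E2 m (\<lambda>a b. \<Sum>i<d. (v 1 (-1) i + (\<Sum>t<m. a t * x t i + b t * y t i))\<^sup>2)
        + E2 m (\<lambda>a b. \<Sum>i<d. (v (-1) 1 i + (\<Sum>t<m. a t * x t i + b t * y t i))\<^sup>2)
        + E2 m (\<lambda>a b. \<Sum>i<d. (v (-1) (-1) i + (\<Sum>t<m. a t * x t i + b t * y t i))\<^sup>2)) / 4"
    unfolding E2_divide E2_add by simp
  also have "\<dots> = (\<Sum>i<d. (u i)\<^sup>2) + (\<Sum>t<Suc m. \<Sum>i<d. (x t i)\<^sup>2 + (y t i)\<^sup>2)"
    unfolding Suc.IH using alg by simp
  finally show ?case .
qed

lemma numeric:
  assumes n: "n \<ge> 1" and d: "d \<ge> 1" and a: "a > 0" and b: "b > 0" and L: "L \<ge> 0"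
  shows "(1 / real n) * (2 * (4 * L\<^sup>2 * a * b) * a * sqrt (real n * (2 * b\<^sup>2)))
    \<le> 100 * (1 / real n + (a\<^sup>2 * b\<^sup>2 * L\<^sup>2 / sqrt (real n)) * sqrt (ln (2 * real d))
                 * ln (2 + real n * b\<^sup>2 * a\<^sup>2 * L\<^sup>2))"
proof -
  have h1: "1/4 \<le> ln (3/2::real)"
    using ln_one_plus_pos_lower_bound[of "1/2"] by (simp add: power2_eq_square)
  have h2: "ln (3/2::real) \<le> ln 2" by simp
  have ln2: "1/4 \<le> ln (2::real)" using h1 h2 by linarith
  have "ln 2 \<le> ln (2 * real d)" using d by simp
  then have "sqrt (1/4) \<le> sqrt (ln (2 * real d))" using ln2 by (intro real_sqrt_le_mono) simp
  then have l1: "1/2 \<le> sqrt (ln (2 * real d))" by (simp add: real_sqrt_divide)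
  have "0 \<le> real n * b\<^sup>2 * a\<^sup>2 * L\<^sup>2" by simp
  then have "ln 2 \<le> ln (2 + real n * b\<^sup>2 * a\<^sup>2 * L\<^sup>2)" by (subst ln_le_cancel_iff) linarith+
  then have l2: "1/4 \<le> ln (2 + real n * b\<^sup>2 * a\<^sup>2 * L\<^sup>2)" using ln2 by simp
  have P: "1/8 \<le> sqrt (ln (2 * real d)) * ln (2 + real n * b\<^sup>2 * a\<^sup>2 * L\<^sup>2)"
  proof -
    have "0 \<le> sqrt (ln (2 * real d))" using l1 by linarith
    then show ?thesis using mult_mono[OF l1 l2] l2 by simp
  qed
  define s where "s = sqrt (real n)"
  have s: "s > 0" "s * s = real n" using n unfolding s_def by auto
  define u where "u = a\<^sup>2 * b\<^sup>2 * L\<^sup>2"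
  have u: "u \<ge> 0" unfolding u_def by simp
  have sq2: "sqrt 2 \<le> (3/2::real)"
    by (rule real_le_lsqrt) (auto simp: power2_eq_square)
  have "sqrt (real n * (2 * b\<^sup>2)) = s * sqrt 2 * b"
    unfolding s_def using b by (simp add: real_sqrt_mult)
  then have LHS: "(1 / real n) * (2 * (4 * L\<^sup>2 * a * b) * a * sqrt (real n * (2 * b\<^sup>2)))
      = 8 * sqrt 2 * (u / s)"
  proof -
    have e: "1 / real n = 1 / (s * s)" using s(2) by simp
    show ?thesis unfolding e \<open>sqrt (real n * (2 * b\<^sup>2)) = s * sqrt 2 * b\<close> u_def
      using s(1) by (simp add: field_simps power2_eq_square)
  qed
  have "8 * sqrt 2 * (u / s) \<le> 12 * (u / s)"
    using sq2 u s by (intro mult_right_mono) auto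
  also have "\<dots> \<le> 100 * ((u / s) * (1/8))" using u s(1) by (simp add: field_simps)
  also have "\<dots> \<le> 100 * ((u / s) * (sqrt (ln (2 * real d)) * ln (2 + real n * b\<^sup>2 * a\<^sup>2 * L\<^sup>2)))"
    using P u s by (intro mult_left_mono) auto
  also have "\<dots> \<le> 100 * (1 / real n + (u / s) * sqrt (ln (2 * real d)) * ln (2 + real n * b\<^sup>2 * a\<^sup>2 * L\<^sup>2))"
    by (simp add: mult.assoc)
  finally show ?thesis using LHS unfolding u_def s_def by simp
qed

lemma E2_cmult: "E2 m (\<lambda>a b. c * F a b) = c * E2 m F"
  unfolding E2_def by (simp add: E_cmult)

lemma CS: "\<bar>\<Sum>i<d. w i * y i\<bar> \<le> sqrt (\<Sum>i<d. (w i)\<^sup>2) * sqrt (\<Sum>i<d. (y i)\<^sup>2)"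
proof -
  have "\<bar>\<Sum>i<d. w i * y i\<bar> \<le> (\<Sum>i<d. \<bar>w i\<bar> * \<bar>y i\<bar>)"
    unfolding abs_mult[symmetric] by (rule sum_abs)
  also have "\<dots> \<le> L2_set w {..<d} * L2_set y {..<d}" by (rule L2_set_mult_ineq)
  finally show ?thesis unfolding L2_set_def .
qed

lemma sqrt_le_sq: "sqrt X \<le> c \<Longrightarrow> 0 \<le> X \<Longrightarrow> X \<le> c\<^sup>2"
proof -
  assume h: "sqrt X \<le> c" "0 \<le> X"
  have "(sqrt X)\<^sup>2 \<le> c\<^sup>2" by (rule power_mono[OF h(1)]) (use h(2) in simp)
  then show ?thesis using h(2) by simp
qed



lemma main:
  fixes n d k :: nat and \<phi> :: "real \<Rightarrow> real" and L b a :: real and x x' :: "nat \<Rightarrow> nat \<Rightarrow> real"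
  assumes n: "n \<ge> 1" and d: "d \<ge> 1" and k: "k \<ge> 1"
    and lipphi: "\<forall>s t. \<bar>\<phi> s - \<phi> t\<bar> \<le> L * \<bar>s - t\<bar>" and phi0: "\<phi> 0 = 0"
    and b: "b > 0"
    and xb: "\<forall>t<n. sqrt (\<Sum>i<d. (x t i)\<^sup>2) \<le> b \<and> sqrt (\<Sum>i<d. (x' t i)\<^sup>2) \<le> b"
    and a: "a > 0"
  shows "rademacher n (F_class n d k \<phi> x x' (G_ball d k a))
     \<le> (1 / real n) * (2 * (4 * L\<^sup>2 * a * b) * a * sqrt (real n * (2 * b\<^sup>2)))"
proof -
  have L: "L \<ge> 0" using lipphi[rule_format, of 1 0] by simp
  have phib: "\<bar>\<phi> s\<bar> \<le> L * \<bar>s\<bar>" for s using lipphi[rule_format, of s 0] phi0 by simp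
  define W where "W = {w :: nat \<Rightarrow> real. (\<Sum>i<d. (w i)\<^sup>2) \<le> a\<^sup>2}"
  define p where "p t w = (\<Sum>i<d. w i * x t i)" for t w
  define q where "q t w = (\<Sum>i<d. w i * x' t i)" for t w
  define psi where "psi t w = (\<phi> (p t w) - \<phi> (q t w))\<^sup>2" for t w
  define K where "K = 4 * L\<^sup>2 * a * b"
  have K0: "K \<ge> 0" unfolding K_def using a b by simp
  have W0: "(\<lambda>_. 0) \<in> W" unfolding W_def by simp
  then have Wne: "W \<noteq> {}" by auto
  have wa: "sqrt (\<Sum>i<d. (w i)\<^sup>2) \<le> a" if "w \<in> W" for w
  proof -
    have "sqrt (\<Sum>i<d. (w i)\<^sup>2) \<le> sqrt (a\<^sup>2)" using that unfolding W_def by (intro real_sqrt_le_mono) simp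
    then show ?thesis using a by simp
  qed
  have gen: "\<bar>\<Sum>i<d. w i * y i\<bar> \<le> a * b" if "w \<in> W" "sqrt (\<Sum>i<d. (y i)\<^sup>2) \<le> b" for w y
  proof -
    have "0 \<le> (\<Sum>i<d. (y i)\<^sup>2)" by (simp add: sum_nonneg)
    then show ?thesis using CS[of w y d] mult_mono[OF wa[OF that(1)] that(2)] a by simp
  qed
  have pb: "\<bar>p t w\<bar> \<le> a * b" if "w \<in> W" "t < n" for w t
    unfolding p_def using gen that xb by blast
  have qb: "\<bar>q t w\<bar> \<le> a * b" if "w \<in> W" "t < n" for w t
    unfolding q_def using gen that xb by blast
  have Db: "\<bar>\<phi> (p t w) - \<phi> (q t w)\<bar> \<le> 2 * L * a * b" if "w \<in> W" "t < n" for w t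
  proof -
    have "\<bar>\<phi> (p t w) - \<phi> (q t w)\<bar> \<le> \<bar>\<phi> (p t w)\<bar> + \<bar>\<phi> (q t w)\<bar>" by simp
    also have "\<dots> \<le> L * \<bar>p t w\<bar> + L * \<bar>q t w\<bar>" using phib by (intro add_mono)
    also have "\<dots> \<le> L * (a * b) + L * (a * b)"
      using pb[OF that] qb[OF that] L by (intro add_mono mult_left_mono)
    finally show ?thesis by simp
  qed
  have bp: "bnd W (p t)" if "t < n" for t unfolding bnd_def using pb that by blast
  have bq: "bnd W (q t)" if "t < n" for t unfolding bnd_def using qb that by blast
  have bpsi: "bnd W (psi t)" if "t < n" for t
  proof -
    have "\<forall>w\<in>W. \<bar>psi t w\<bar> \<le> (2 * L * a * b)\<^sup>2"
    proof
      fix w assume w: "w \<in> W"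
      have "\<bar>\<phi> (p t w) - \<phi> (q t w)\<bar> \<le> \<bar>2 * L * a * b\<bar>" using Db[OF w that] by simp
      then have "(\<phi> (p t w) - \<phi> (q t w))\<^sup>2 \<le> (2 * L * a * b)\<^sup>2" by (simp add: abs_le_square_iff)
      then show "\<bar>psi t w\<bar> \<le> (2 * L * a * b)\<^sup>2" unfolding psi_def by simp
    qed
    then show ?thesis unfolding bnd_def by blast
  qed
  have lip: "psi t w - psi t w' \<le> K * (\<bar>p t w - p t w'\<bar> + \<bar>q t w - q t w'\<bar>)"
    if t: "t < n" and w: "w \<in> W" "w' \<in> W" for t w w'
  proof -
    define D where "D = \<phi> (p t w) - \<phi> (q t w)"
    define D' where "D' = \<phi> (p t w') - \<phi> (q t w')"
    have "psi t w - psi t w' = (D - D') * (D + D')"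
      unfolding psi_def D_def D'_def by (simp add: power2_eq_square algebra_simps)
    also have "\<dots> \<le> \<bar>D - D'\<bar> * \<bar>D + D'\<bar>" by (metis abs_ge_self abs_mult)
    also have "\<dots> \<le> (L * (\<bar>p t w - p t w'\<bar> + \<bar>q t w - q t w'\<bar>)) * (4 * L * a * b)"
    proof (rule mult_mono)
      have "\<bar>D - D'\<bar> \<le> \<bar>\<phi> (p t w) - \<phi> (p t w')\<bar> + \<bar>\<phi> (q t w) - \<phi> (q t w')\<bar>"
      proof -
        have eq: "D - D' = (\<phi> (p t w) - \<phi> (p t w')) - (\<phi> (q t w) - \<phi> (q t w'))"
          unfolding D_def D'_def by simp
        show ?thesis unfolding eq by (rule abs_triangle_ineq4)
      qed
      also have "\<dots> \<le> L * \<bar>p t w - p t w'\<bar> + L * \<bar>q t w - q t w'\<bar>"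
        using lipphi by (intro add_mono) auto
      finally show "\<bar>D - D'\<bar> \<le> L * (\<bar>p t w - p t w'\<bar> + \<bar>q t w - q t w'\<bar>)"
        by (simp add: algebra_simps)
      have "\<bar>D + D'\<bar> \<le> \<bar>D\<bar> + \<bar>D'\<bar>" by (rule abs_triangle_ineq)
      also have "\<dots> \<le> 2 * L * a * b + 2 * L * a * b"
        unfolding D_def D'_def using Db[OF w(1) t] Db[OF w(2) t] by (rule add_mono)
      finally show "\<bar>D + D'\<bar> \<le> 4 * L * a * b" by simp
      show "0 \<le> L * (\<bar>p t w - p t w'\<bar> + \<bar>q t w - q t w'\<bar>)" using L by simp
      show "0 \<le> \<bar>D + D'\<bar>" by simp
    qed
    also have "\<dots> = K * (\<bar>p t w - p t w'\<bar> + \<bar>q t w - q t w'\<bar>)"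
      unfolding K_def by (simp add: power2_eq_square algebra_simps)
    finally show ?thesis .
  qed
  have contr: "E n (\<lambda>e. S W (\<lambda>w. 0 + (\<Sum>t<n. e t * psi t w)))
    \<le> E2 n (\<lambda>al be. S W (\<lambda>w. 0 + 2*K*(\<Sum>t<n. al t * p t w + be t * q t w)))"
    by (rule contraction[OF Wne K0 bpsi bp bq lip]) (auto intro: bnd_const)
  define S0 where "S0 e = S W (\<lambda>w. 0 + (\<Sum>t<n. e t * psi t w))" for e
  have bS: "bnd W (\<lambda>w. 0 + (\<Sum>t<n. e t * psi t w))" for e
    by (intro bnd_add bnd_const bnd_sum bnd_cmult bpsi) auto
  have Gne: "(\<lambda>_ _. 0) \<in> G_ball d k a"
  proof -
    have "{sqrt (\<Sum>i<d. ((\<lambda>_ _. 0::real) i j)\<^sup>2) | j. j < k} = {0}" using k by (auto intro: exI[of _ 0])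
    then show ?thesis unfolding G_ball_def matrices_def norm_2_inf_def using a by simp
  qed
  have col: "(\<lambda>l. A l j) \<in> W" if A: "A \<in> G_ball d k a" and j: "j < k" for A j
  proof -
    have fin: "finite {sqrt (\<Sum>i<d. (A i j)\<^sup>2) | j. j < k}" by simp
    have "sqrt (\<Sum>i<d. (A i j)\<^sup>2) \<le> norm_2_inf d k A"
      unfolding norm_2_inf_def by (rule Max_ge[OF fin]) (use j in blast)
    also have "\<dots> \<le> a" using A unfolding G_ball_def by simp
    finally have "sqrt (\<Sum>i<d. (A i j)\<^sup>2) \<le> a" .
    then have "(\<Sum>i<d. (A i j)\<^sup>2) \<le> a\<^sup>2" by (rule sqrt_le_sq) (simp add: sum_nonneg)
    then show ?thesis unfolding W_def by simp
  qed
  have R1: "Sup ((\<lambda>f. \<Sum>i<n. e i * f i) ` F_class n d k \<phi> x x' (G_ball d k a)) \<le> S0 e" for e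
    unfolding F_class_def image_image
  proof (rule cSup_least)
    show "(\<lambda>A. \<Sum>i<n. e i * (if i < n then zeta k (\<lambda>j. \<phi> (matT_vec d A (x i) j)) (\<lambda>j. \<phi> (matT_vec d A (x' i) j)) else 0)) ` G_ball d k a \<noteq> {}"
      using Gne by blast
  next
    fix v assume "v \<in> (\<lambda>A. \<Sum>i<n. e i * (if i < n then zeta k (\<lambda>j. \<phi> (matT_vec d A (x i) j)) (\<lambda>j. \<phi> (matT_vec d A (x' i) j)) else 0)) ` G_ball d k a"
    then obtain A where A: "A \<in> G_ball d k a"
      and v: "v = (\<Sum>i<n. e i * (if i < n then zeta k (\<lambda>j. \<phi> (matT_vec d A (x i) j)) (\<lambda>j. \<phi> (matT_vec d A (x' i) j)) else 0))"
      by blast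
    have z: "zeta k (\<lambda>j. \<phi> (matT_vec d A (x i) j)) (\<lambda>j. \<phi> (matT_vec d A (x' i) j))
        = (1 / real k) * (\<Sum>j<k. psi i (\<lambda>l. A l j))" for i
      unfolding zeta_def matT_vec_def psi_def p_def q_def by (simp add: mult.commute)
    have "v = (\<Sum>i<n. e i * ((1 / real k) * (\<Sum>j<k. psi i (\<lambda>l. A l j))))"
      unfolding v z by (rule sum.cong) auto
    also have "\<dots> = (1 / real k) * (\<Sum>j<k. \<Sum>i<n. e i * psi i (\<lambda>l. A l j))"
      by (subst sum.swap) (simp add: sum_distrib_left algebra_simps)
    also have "\<dots> \<le> (1 / real k) * (\<Sum>j<k. S0 e)"
    proof (intro mult_left_mono sum_mono)
      fix j assume "j \<in> {..<k}"
      then have "(\<lambda>l. A l j) \<in> W" using col[OF A] by simp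
      from S_upper[OF bS this, of e] show "(\<Sum>i<n. e i * psi i (\<lambda>l. A l j)) \<le> S0 e"
        unfolding S0_def by simp
    qed simp
    also have "\<dots> = S0 e" using k by simp
    finally show "v \<le> S0 e" .
  qed
  define Nv where "Nv al be = sqrt (\<Sum>i<d. (\<Sum>t<n. al t * x t i + be t * x' t i)\<^sup>2)" for al be
  have R2: "S W (\<lambda>w. 0 + 2*K*(\<Sum>t<n. al t * p t w + be t * q t w)) \<le> 2 * K * a * Nv al be" for al be
  proof (rule S_least[OF Wne])
    fix w assume w: "w \<in> W"
    have "(\<Sum>t<n. al t * p t w + be t * q t w) = (\<Sum>t<n. \<Sum>i<d. w i * (al t * x t i + be t * x' t i))"
      unfolding p_def q_def by (simp add: sum_distrib_left sum.distrib[symmetric] algebra_simps)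
    also have "\<dots> = (\<Sum>i<d. w i * (\<Sum>t<n. al t * x t i + be t * x' t i))"
      by (subst sum.swap) (simp add: sum_distrib_left)
    finally have eq: "(\<Sum>t<n. al t * p t w + be t * q t w) = (\<Sum>i<d. w i * (\<Sum>t<n. al t * x t i + be t * x' t i))" .
    have "\<bar>\<Sum>i<d. w i * (\<Sum>t<n. al t * x t i + be t * x' t i)\<bar> \<le> sqrt (\<Sum>i<d. (w i)\<^sup>2) * Nv al be"
      unfolding Nv_def by (rule CS)
    also have "\<dots> \<le> a * Nv al be" using wa[OF w] by (intro mult_right_mono) (auto simp: Nv_def sum_nonneg)
    finally have "(\<Sum>t<n. al t * p t w + be t * q t w) \<le> a * Nv al be" unfolding eq by simp
    then have "2 * K * (\<Sum>t<n. al t * p t w + be t * q t w) \<le> 2 * K * (a * Nv al be)"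
      using K0 by (intro mult_left_mono) auto
    then show "0 + 2*K*(\<Sum>t<n. al t * p t w + be t * q t w) \<le> 2 * K * a * Nv al be" by simp
  qed
  have xsum: "(\<Sum>t<n. \<Sum>i<d. (x t i)\<^sup>2 + (x' t i)\<^sup>2) \<le> real n * (2 * b\<^sup>2)"
  proof -
    have "(\<Sum>t<n. \<Sum>i<d. (x t i)\<^sup>2 + (x' t i)\<^sup>2) \<le> (\<Sum>t<n. 2 * b\<^sup>2)"
    proof (rule sum_mono)
      fix t assume "t \<in> {..<n}"
      then have "sqrt (\<Sum>i<d. (x t i)\<^sup>2) \<le> b" "sqrt (\<Sum>i<d. (x' t i)\<^sup>2) \<le> b" using xb by auto
      then have "(\<Sum>i<d. (x t i)\<^sup>2) \<le> b\<^sup>2" "(\<Sum>i<d. (x' t i)\<^sup>2) \<le> b\<^sup>2"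
        by (auto intro!: sqrt_le_sq simp: sum_nonneg)
      then show "(\<Sum>i<d. (x t i)\<^sup>2 + (x' t i)\<^sup>2) \<le> 2 * b\<^sup>2" by (simp add: sum.distrib)
    qed
    then show ?thesis by simp
  qed
  have SM: "E2 n (\<lambda>al be. (Nv al be)\<^sup>2) = (\<Sum>t<n. \<Sum>i<d. (x t i)\<^sup>2 + (x' t i)\<^sup>2)"
    using second_moment[where m=n and u="\<lambda>_. 0" and d=d and x=x and y=x'] unfolding Nv_def by (simp add: sum_nonneg)
  have "rademacher n (F_class n d k \<phi> x x' (G_ball d k a))
     = (1 / real n) * E n (\<lambda>e. Sup ((\<lambda>f. \<Sum>i<n. e i * f i) ` F_class n d k \<phi> x x' (G_ball d k a)))"
    unfolding rademacher_def E_def signs_def by simp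
  also have "\<dots> \<le> (1 / real n) * E n S0"
    by (intro mult_left_mono E_mono R1) auto
  also have "\<dots> \<le> (1 / real n) * E2 n (\<lambda>al be. S W (\<lambda>w. 0 + 2*K*(\<Sum>t<n. al t * p t w + be t * q t w)))"
    using contr unfolding S0_def by (intro mult_left_mono) auto
  also have "\<dots> \<le> (1 / real n) * E2 n (\<lambda>al be. 2 * K * a * Nv al be)"
    by (intro mult_left_mono E2_mono R2) auto
  also have "\<dots> = (1 / real n) * (2 * K * a * E2 n Nv)" by (simp add: E2_cmult)
  also have "\<dots> \<le> (1 / real n) * (2 * K * a * sqrt (E2 n (\<lambda>al be. (Nv al be)\<^sup>2)))"
    using K0 a by (intro mult_left_mono E2_jensen) auto
  also have "\<dots> \<le> (1 / real n) * (2 * K * a * sqrt (real n * (2 * b\<^sup>2)))"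
    unfolding SM using K0 a xsum by (intro mult_left_mono real_sqrt_le_mono) auto
  finally show ?thesis unfolding K_def .
qed


theorem theorem2:
  shows "\<exists>C>0. \<forall>(n::nat) (d::nat) (k::nat) (\<phi>::real \<Rightarrow> real) (L::real) (b::real)
      (x::nat \<Rightarrow> nat \<Rightarrow> real) (x'::nat \<Rightarrow> nat \<Rightarrow> real) (a::real).
      n \<ge> 1 \<longrightarrow> d \<ge> 1 \<longrightarrow> k \<ge> 1 \<longrightarrow>
      (\<forall>s t. \<bar>\<phi> s - \<phi> t\<bar> \<le> L * \<bar>s - t\<bar>) \<longrightarrow> \<phi> 0 = 0 \<longrightarrow>
      b > 0 \<longrightarrow>
      (\<forall>t<n. sqrt (\<Sum>i<d. (x t i)\<^sup>2) \<le> b \<and> sqrt (\<Sum>i<d. (x' t i)\<^sup>2) \<le> b) \<longrightarrow>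
      a > 0 \<longrightarrow>
      rademacher n (F_class n d k \<phi> x x' (G_ball d k a))
        \<le> C * (1 / real n + (a\<^sup>2 * b\<^sup>2 * L\<^sup>2 / sqrt (real n)) * sqrt (ln (2 * real d))
                 * ln (2 + real n * b\<^sup>2 * a\<^sup>2 * L\<^sup>2))"
proof (rule exI[of _ 100], intro conjI allI impI)
  fix n d k :: nat and \<phi> :: "real \<Rightarrow> real" and L b a :: real and x x' :: "nat \<Rightarrow> nat \<Rightarrow> real"
  assume n: "n \<ge> 1" and d: "d \<ge> 1" and k: "k \<ge> 1"
    and lipphi: "\<forall>s t. \<bar>\<phi> s - \<phi> t\<bar> \<le> L * \<bar>s - t\<bar>" and phi0: "\<phi> 0 = 0"
    and b: "b > 0"
    and xb: "\<forall>t<n. sqrt (\<Sum>i<d. (x t i)\<^sup>2) \<le> b \<and> sqrt (\<Sum>i<d. (x' t i)\<^sup>2) \<le> b"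
    and a: "a > 0"
  have L: "L \<ge> 0" using lipphi[rule_format, of 1 0] by simp
  show "rademacher n (F_class n d k \<phi> x x' (G_ball d k a))
        \<le> 100 * (1 / real n + (a\<^sup>2 * b\<^sup>2 * L\<^sup>2 / sqrt (real n)) * sqrt (ln (2 * real d))
                 * ln (2 + real n * b\<^sup>2 * a\<^sup>2 * L\<^sup>2))"
    using main[OF n d k lipphi phi0 b xb a] numeric[OF n d a b L] by linarith
qed simp

end
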